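(* Let $(\Lambda,d)$ be a $2$-graph such that $\Lambda$ is row-finite, the blue graph $\Lambda_{\mathrm b}$ contains no cycles, and each vertex is the range of an isolated cycle lying in the red graph $\Lambda_{\mathrm r}$. Let $\lambda_1,\lambda_2$ be isolated cycles in $\Lambda_{\mathrm r}$ and let $V_1,V_2$ be the sets of vertices on $\lambda_1,\lambda_2$. (1) For every red path $\mu$ with $r(\mu)\in V_1$, the map $\sigma\mapsto\mathcal F_1(\mu,\sigma)$ is a degree-preserving bijection from $s(\mu)\Lambda_{\mathrm b}V_2$ onto $r(\mu)\Lambda_{\mathrm b}V_2$. (2) For every red path $\nu$ with $r(\nu)\in V_2$, the map $\sigma\mapsto\mathcal F_2(\sigma,\nu)$ is a degree-preserving bijection from $V_1\Lambda_{\mathrm b}r(\nu)$ onto $V_1\Lambda_{\mathrm b}s(\nu)$.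
   Context: A $2$-graph is a countable category $\Lambda$ with a functor $d:\Lambda\to\mathbb N^2$ satisfying the unique factorisation property (if $d(\lambda)=m+n$ there are unique $\mu,\nu$ with $d(\mu)=m,d(\nu)=n,\lambda=\mu\nu$). Vertices $\Lambda^0$ are the degree-$0$ paths; $r,s$ are range and source; $\mu\nu$ is defined when $s(\mu)=r(\nu)$; $\Lambda^n=d^{-1}(n)$, $e_1=(1,0)$, $e_2=(0,1)$. For sets $V,W$ of vertices and $E\subseteq\Lambda$, $VEW=\{\lambda\in E:r(\lambda)\in V,s(\lambda)\in W\}$ (with $v$ for $\{v\}$). For $0\le m\le n\le d(\lambda)$, $\lambda(m,n)$ is the unique path with $\lambda=\lambda'\lambda(m,n)\lambda''$, $d(\lambda')=m$, $d(\lambda(m,n))=n-m$, and $\lambda(n)=\lambda(n,n)$. Blue paths: degree in $\mathbb Ne_1$; red paths: degree in $\mathbb Ne_2$; $\Lambda_{\mathrm b},\Lambda_{\mathrm r}$ the sets of blue/red paths. Row-finite: $v\Lambda^n$ finite for all $v,n$. A cycle is a path $\lambda$ with $d(\lambda)\ne0$, $r(\lambda)=s(\lambda)$, $\lambda(n)\neq s(\lambda)$ for $0<n<d(\lambda)$; it is isolated if there is no $n\le d(\lambda)$ with $r(\lambda)\Lambda^n\setminus\{\lambda(0,n)\}\ne\emptyset$ and no $n\le d(\lambda)$ with $\Lambda^ns(\lambda)\setminus\{\lambda(d(\lambda)-n,d(\lambda))\}\neq\emptyset$. For $\rho,\tau$ with $s(\rho)=r(\tau)$, $\mathcal F_1(\rho,\tau):=(\rho\tau)(0,d(\tau))$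 and $\mathcal F_2(\rho,\tau):=(\rho\tau)(d(\tau),d(\rho\tau))$, so $\mathcal F_1(\rho,\tau)\mathcal F_2(\rho,\tau)=\rho\tau$. *)

theory Defs
  imports Main "HOL-Library.Countable_Set" "HOL-Library.Product_Plus" "HOL-Library.Product_Order"
begin

text \<open>A 2-graph as a small category whose morphisms (paths) form a carrier set;
objects are identified with identity morphisms, i.e. the degree-0 paths.\<close>

record 'a twograph =
  paths :: "'a set"
  rng   :: "'a \<Rightarrow> 'a"
  src   :: "'a \<Rightarrow> 'a"
  comp  :: "'a \<Rightarrow> 'a \<Rightarrow> 'a"
  deg   :: "'a \<Rightarrow> nat \<times> nat"

definition vertices :: "('a, 'b) twograph_scheme \<Rightarrow> 'a set" where
  "vertices G = {v \<in> paths G. deg G v = 0}"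

definition is_2graph :: "('a, 'b) twograph_scheme \<Rightarrow> bool" where
  "is_2graph G \<longleftrightarrow>
     countable (paths G) \<and>
     (\<forall>l\<in>paths G. rng G l \<in> vertices G \<and> src G l \<in> vertices G) \<and>
     (\<forall>v\<in>vertices G. rng G v = v \<and> src G v = v) \<and>
     (\<forall>l\<in>paths G. comp G (rng G l) l = l \<and> comp G l (src G l) = l) \<and>
     (\<forall>m\<in>paths G. \<forall>n\<in>paths G. src G m = rng G n \<longrightarrow>
         comp G m n \<in> paths G \<and> rng G (comp G m n) = rng G m \<and>
         src G (comp G m n) = src G n \<and> deg G (comp G m n) = deg G m + deg G n) \<and>
     (\<forall>a\<in>paths G. \<forall>b\<in>paths G. \<forall>c\<in>paths G. src G a = rng G b \<longrightarrow> src G b = rng G c \<longrightarrow>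
         comp G (comp G a b) c = comp G a (comp G b c)) \<and>
     (\<forall>l\<in>paths G. \<forall>m n. deg G l = m + n \<longrightarrow>
         (\<exists>!(p, q). p \<in> paths G \<and> q \<in> paths G \<and> src G p = rng G q \<and>
                    deg G p = m \<and> deg G q = n \<and> comp G p q = l))"

text \<open>The segment l(m,n) for 0 <= m <= n <= d(l).\<close>
definition seg :: "('a, 'b) twograph_scheme \<Rightarrow> 'a \<Rightarrow> nat \<times> nat \<Rightarrow> nat \<times> nat \<Rightarrow> 'a" where
  "seg G l m n = (THE p. \<exists>a b. a \<in> paths G \<and> p \<in> paths G \<and> b \<in> paths G \<and>
       src G a = rng G p \<and> src G p = rng G b \<and>
       deg G a = m \<and> deg G p = n - m \<and> l = comp G (comp G a p) b)"

definition blue :: "('a, 'b) twograph_scheme \<Rightarrow> 'a \<Rightarrow> bool" where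
  "blue G l \<longleftrightarrow> l \<in> paths G \<and> snd (deg G l) = 0"

definition red :: "('a, 'b) twograph_scheme \<Rightarrow> 'a \<Rightarrow> bool" where
  "red G l \<longleftrightarrow> l \<in> paths G \<and> fst (deg G l) = 0"

definition row_finite :: "('a, 'b) twograph_scheme \<Rightarrow> bool" where
  "row_finite G \<longleftrightarrow> (\<forall>v\<in>vertices G. \<forall>n. finite {l \<in> paths G. rng G l = v \<and> deg G l = n})"

definition is_cycle :: "('a, 'b) twograph_scheme \<Rightarrow> 'a \<Rightarrow> bool" where
  "is_cycle G l \<longleftrightarrow> l \<in> paths G \<and> deg G l \<noteq> 0 \<and> rng G l = src G l \<and>
     (\<forall>n. 0 < n \<and> n < deg G l \<longrightarrow> seg G l n n \<noteq> src G l)"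

definition isolated_cycle :: "('a, 'b) twograph_scheme \<Rightarrow> 'a \<Rightarrow> bool" where
  "isolated_cycle G l \<longleftrightarrow> is_cycle G l \<and>
     \<not> (\<exists>n \<le> deg G l. {p \<in> paths G. rng G p = rng G l \<and> deg G p = n} - {seg G l 0 n} \<noteq> {}) \<and>
     \<not> (\<exists>n \<le> deg G l. {p \<in> paths G. src G p = src G l \<and> deg G p = n}
                          - {seg G l (deg G l - n) (deg G l)} \<noteq> {})"

definition verts_on :: "('a, 'b) twograph_scheme \<Rightarrow> 'a \<Rightarrow> 'a set" where
  "verts_on G l = {seg G l n n | n. n \<le> deg G l}"

definition F1 :: "('a, 'b) twograph_scheme \<Rightarrow> 'a \<Rightarrow> 'a \<Rightarrow> 'a" where
  "F1 G p t = seg G (comp G p t) 0 (deg G t)"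

definition F2 :: "('a, 'b) twograph_scheme \<Rightarrow> 'a \<Rightarrow> 'a \<Rightarrow> 'a" where
  "F2 G p t = seg G (comp G p t) (deg G t) (deg G (comp G p t))"

end

theory Submission
  imports Defs
begin


locale tg = fixes G :: "('a, 'b) twograph_scheme" assumes tg: "is_2graph G"
begin

lemma rs_vert: "l \<in> paths G \<Longrightarrow> rng G l \<in> vertices G \<and> src G l \<in> vertices G"
  using tg unfolding is_2graph_def by blast
lemma vert_rs: "v \<in> vertices G \<Longrightarrow> rng G v = v \<and> src G v = v"
  using tg unfolding is_2graph_def by blast
lemma vert_P: "v \<in> vertices G \<Longrightarrow> v \<in> paths G \<and> deg G v = 0"
  unfolding vertices_def by blast
lemma deg0_vert: "v \<in> paths G \<Longrightarrow> deg G v = 0 \<Longrightarrow> v \<in> vertices G"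
  unfolding vertices_def by blast
lemma comp_id: "l \<in> paths G \<Longrightarrow> comp G (rng G l) l = l \<and> comp G l (src G l) = l"
  using tg unfolding is_2graph_def by blast
lemma comp_ok: "m \<in> paths G \<Longrightarrow> n \<in> paths G \<Longrightarrow> src G m = rng G n \<Longrightarrow>
   comp G m n \<in> paths G \<and> rng G (comp G m n) = rng G m \<and>
   src G (comp G m n) = src G n \<and> deg G (comp G m n) = deg G m + deg G n"
  using tg unfolding is_2graph_def by blast
lemma assoc: "a \<in> paths G \<Longrightarrow> b \<in> paths G \<Longrightarrow> c \<in> paths G \<Longrightarrow> src G a = rng G b \<Longrightarrow>
   src G b = rng G c \<Longrightarrow> comp G (comp G a b) c = comp G a (comp G b c)"
  using tg unfolding is_2graph_def by blast
lemma fact1: "l \<in> paths G \<Longrightarrow> deg G l = m + n \<Longrightarrow>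
  (\<exists>!(p, q). p \<in> paths G \<and> q \<in> paths G \<and> src G p = rng G q \<and>
                    deg G p = m \<and> deg G q = n \<and> comp G p q = l)"
  using tg unfolding is_2graph_def by blast
lemma fact_ex: "l \<in> paths G \<Longrightarrow> deg G l = m + n \<Longrightarrow>
  \<exists>p q. p \<in> paths G \<and> q \<in> paths G \<and> src G p = rng G q \<and>
                    deg G p = m \<and> deg G q = n \<and> comp G p q = l"
  using fact1[of l m n] by auto
lemma fact_un:
  assumes "p \<in> paths G" "q \<in> paths G" "p' \<in> paths G" "q' \<in> paths G"
    "src G p = rng G q" "src G p' = rng G q'" "deg G p = deg G p'" "deg G q = deg G q'"
    "comp G p q = comp G p' q'"
  shows "p = p' \<and> q = q'"
proof -
  let ?l = "comp G p q"
  have "?l \<in> paths G" "deg G ?l = deg G p + deg G q" using comp_ok assms by auto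
  from fact1[OF this] obtain x where
    x: "case x of (a, b) \<Rightarrow> a \<in> paths G \<and> b \<in> paths G \<and> src G a = rng G b \<and>
                    deg G a = deg G p \<and> deg G b = deg G q \<and> comp G a b = ?l"
    and u: "\<forall>y. (case y of (a, b) \<Rightarrow> a \<in> paths G \<and> b \<in> paths G \<and> src G a = rng G b \<and>
                    deg G a = deg G p \<and> deg G b = deg G q \<and> comp G a b = ?l) \<longrightarrow> y = x"
    by (elim ex1E) blast
  have "(p, q) = x" using u assms by auto
  moreover have "(p', q') = x" using u assms by auto
  ultimately show ?thesis by auto
qed

lemma cancel_l: "a \<in> paths G \<Longrightarrow> x \<in> paths G \<Longrightarrow> y \<in> paths G \<Longrightarrow> src G a = rng G x \<Longrightarrow>
  src G a = rng G y \<Longrightarrow> deg G x = deg G y \<Longrightarrow> comp G a x = comp G a y \<Longrightarrow> x = y"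
  using fact_un[of a x a y] by auto
lemma cancel_r: "b \<in> paths G \<Longrightarrow> x \<in> paths G \<Longrightarrow> y \<in> paths G \<Longrightarrow> src G x = rng G b \<Longrightarrow>
  src G y = rng G b \<Longrightarrow> deg G x = deg G y \<Longrightarrow> comp G x b = comp G y b \<Longrightarrow> x = y"
  using fact_un[of x b y b] by auto

lemma seg_eq:
  assumes "a \<in> paths G" "p \<in> paths G" "b \<in> paths G" "src G a = rng G p" "src G p = rng G b"
    "deg G a = m" "deg G p = n - m" "l = comp G (comp G a p) b"
  shows "seg G l m n = p"
  unfolding seg_def
proof (rule the_equality)
  show "\<exists>a b. a \<in> paths G \<and> p \<in> paths G \<and> b \<in> paths G \<and> src G a = rng G p \<and> src G p = rng G b \<and>
       deg G a = m \<and> deg G p = n - m \<and> l = comp G (comp G a p) b" using assms by blast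
next
  fix p' assume "\<exists>a b. a \<in> paths G \<and> p' \<in> paths G \<and> b \<in> paths G \<and> src G a = rng G p' \<and> src G p' = rng G b \<and>
       deg G a = m \<and> deg G p' = n - m \<and> l = comp G (comp G a p') b"
  then obtain a' b' where h: "a' \<in> paths G" "p' \<in> paths G" "b' \<in> paths G" "src G a' = rng G p'"
    "src G p' = rng G b'" "deg G a' = m" "deg G p' = n - m" "l = comp G (comp G a' p') b'" by blast
  have c1: "comp G a p \<in> paths G" "src G (comp G a p) = rng G b" "deg G (comp G a p) = m + (n - m)"
    using comp_ok assms by auto
  have c2: "comp G a' p' \<in> paths G" "src G (comp G a' p') = rng G b'" "deg G (comp G a' p') = m + (n - m)"
    using comp_ok h by auto
  have dl: "deg G l = deg G (comp G a p) + deg G b" "deg G l = deg G (comp G a' p') + deg G b'"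
    using comp_ok[of "comp G a p" b] comp_ok[of "comp G a' p'" b'] c1 c2 assms(3,8) h(3,8) by auto
  hence "deg G b = deg G b'" using c1 c2 by simp
  hence "comp G a p = comp G a' p'" using fact_un[of "comp G a p" b "comp G a' p'" b'] c1 c2 assms h by auto
  thus "p' = p" using fact_un[of a p a' p'] assms h by auto
qed

lemma seg_prefix: "p \<in> paths G \<Longrightarrow> b \<in> paths G \<Longrightarrow> src G p = rng G b \<Longrightarrow> seg G (comp G p b) 0 (deg G p) = p"
  by (rule seg_eq[of "rng G p" p b]) (auto simp: comp_id rs_vert vert_rs vert_P)

lemma seg_suffix: "a \<in> paths G \<Longrightarrow> p \<in> paths G \<Longrightarrow> src G a = rng G p \<Longrightarrow>
   seg G (comp G a p) (deg G a) (deg G (comp G a p)) = p"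
proof (rule seg_eq[of a p "src G p"])
  assume "a \<in> paths G" "p \<in> paths G" "src G a = rng G p"
  then show "comp G a p = comp G (comp G a p) (src G p)"
    using comp_ok[of a p] comp_id[of "comp G a p"] by auto
qed (auto simp: comp_id rs_vert vert_rs vert_P comp_ok)

lemma seg_vertex: "a \<in> paths G \<Longrightarrow> b \<in> paths G \<Longrightarrow> src G a = rng G b \<Longrightarrow>
   seg G (comp G a b) (deg G a) (deg G a) = src G a"
proof (rule seg_eq[of a "src G a" b])
  assume "a \<in> paths G" "b \<in> paths G" "src G a = rng G b"
  then show "comp G a b = comp G (comp G a (src G a)) b"
    using comp_id[of a] by auto
qed (auto simp: comp_id rs_vert vert_rs vert_P comp_ok)

end


locale cyc = tg + fixes l assumes iso: "isolated_cycle G l" and rd: "red G l"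
begin

abbreviation "pl \<equiv> snd (deg G l)"

lemma lP: "l \<in> paths G" using iso unfolding isolated_cycle_def is_cycle_def by blast
lemma dl: "deg G l = (0, pl)" using rd unfolding red_def by (simp add: prod_eq_iff)
lemma ppos: "0 < pl" using iso dl unfolding isolated_cycle_def is_cycle_def
  by (metis gr0I zero_prod_def)
lemma rs_l: "rng G l = src G l" using iso unfolding isolated_cycle_def is_cycle_def by blast

lemma iso_r: "x \<in> paths G \<Longrightarrow> rng G x = rng G l \<Longrightarrow> deg G x \<le> deg G l \<Longrightarrow> x = seg G l 0 (deg G x)"
  using iso unfolding isolated_cycle_def by blast
lemma iso_s: "x \<in> paths G \<Longrightarrow> src G x = src G l \<Longrightarrow> deg G x \<le> deg G l \<Longrightarrow>
  x = seg G l (deg G l - deg G x) (deg G l)"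
  using iso unfolding isolated_cycle_def by blast
lemma iso_r2: "x \<in> paths G \<Longrightarrow> y \<in> paths G \<Longrightarrow> rng G x = rng G l \<Longrightarrow> rng G y = rng G l \<Longrightarrow>
   deg G x = deg G y \<Longrightarrow> deg G x \<le> deg G l \<Longrightarrow> x = y"
  using iso_r by metis
lemma iso_s2: "x \<in> paths G \<Longrightarrow> y \<in> paths G \<Longrightarrow> src G x = src G l \<Longrightarrow> src G y = src G l \<Longrightarrow>
   deg G x = deg G y \<Longrightarrow> deg G x \<le> deg G l \<Longrightarrow> x = y"
  using iso_s by metis

abbreviation "V \<equiv> verts_on G l"

lemma vc2:
  assumes "a \<in> paths G" "b \<in> paths G" "src G a = rng G b" "comp G a b = l"
  shows "src G a \<in> V"
proof -
  have "deg G l = deg G a + deg G b" using comp_ok assms by metis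
  hence "deg G a \<le> deg G l" by (simp add: less_eq_prod_def)
  moreover have "seg G l (deg G a) (deg G a) = src G a" using seg_vertex assms by metis
  ultimately show ?thesis unfolding verts_on_def by (intro CollectI exI[of _ "deg G a"]) simp
qed

lemma rl_V: "rng G l \<in> V"
proof -
  have "rng G l \<in> vertices G" using rs_vert lP by blast
  hence "rng G l \<in> paths G" "src G (rng G l) = rng G l" using vert_P vert_rs by auto
  thus ?thesis using vc2[of "rng G l" l] comp_id lP by auto
qed

lemma vc1:
  assumes "v \<in> V"
  shows "\<exists>a b j. a \<in> paths G \<and> b \<in> paths G \<and> src G a = rng G b \<and> comp G a b = l \<and>
     deg G a = (0, j) \<and> j < pl \<and> src G a = v"
proof -
  from assms obtain n where n: "n \<le> deg G l" "v = seg G l n n" unfolding verts_on_def by blast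
  have "deg G l = n + (deg G l - n)" using n(1) by (simp add: prod_eq_iff less_eq_prod_def)
  then obtain a b where ab: "a \<in> paths G" "b \<in> paths G" "src G a = rng G b" "deg G a = n"
     "deg G b = deg G l - n" "comp G a b = l" using fact_ex lP by metis
  have va: "v = src G a" using seg_vertex[of a b] ab n by auto
  have n2: "n = (0, snd n)" "snd n \<le> pl" using n(1) dl by (auto simp: less_eq_prod_def prod_eq_iff)
  show ?thesis
  proof (cases "snd n < pl")
    case True then show ?thesis using ab va n2 by metis
  next
    case False
    hence "deg G b = 0" using ab n2 dl by (simp add: prod_eq_iff)
    hence bv: "b \<in> vertices G" using deg0_vert ab by auto
    hence "b = src G a" using vert_rs ab by auto
    hence "a = l" using comp_id ab by auto
    hence v: "v = rng G l" using va rs_l by simp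
    have "rng G l \<in> vertices G" using rs_vert lP by blast
    hence "rng G l \<in> paths G" "src G (rng G l) = rng G l" "deg G (rng G l) = (0,0)"
      using vert_P vert_rs by (auto simp: zero_prod_def)
    thus ?thesis using v comp_id[of l] lP ppos by metis
  qed
qed

lemma vc3:
  assumes "v \<in> V"
  shows "\<exists>a b i. a \<in> paths G \<and> b \<in> paths G \<and> src G a = rng G b \<and> comp G a b = l \<and>
     deg G b = (0, i) \<and> i < pl \<and> src G a = v"
proof -
  obtain a b j where ab: "a \<in> paths G" "b \<in> paths G" "src G a = rng G b" "comp G a b = l"
     "deg G a = (0, j)" "j < pl" "src G a = v" using vc1 assms by blast
  have "deg G l = deg G a + deg G b" using comp_ok ab by metis
  hence db: "deg G b = (0, pl - j)" using ab dl by (simp add: prod_eq_iff)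
  show ?thesis
  proof (cases "0 < j")
    case True
    then show ?thesis using ab db by (metis diff_less ppos)
  next
    case False
    hence "deg G a = 0" using ab by (simp add: zero_prod_def)
    hence "a \<in> vertices G" using deg0_vert ab by auto
    hence "a = rng G a" "a = src G a" using vert_rs by auto
    hence v: "v = src G l" using ab comp_ok rs_l by metis
    have "src G l \<in> vertices G" using rs_vert lP by blast
    hence "src G l \<in> paths G" "rng G (src G l) = src G l" "deg G (src G l) = (0,0)"
      using vert_P vert_rs by (auto simp: zero_prod_def)
    thus ?thesis using v comp_id[of l] lP ppos by metis
  qed
qed

lemma fwd:
  "\<forall>x y. x \<in> paths G \<and> y \<in> paths G \<and> rng G x \<in> V \<and> rng G y = rng G x \<and>
     deg G x = (0, k) \<and> deg G y = (0, k) \<longrightarrow> src G x \<in> V \<and> x = y"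
proof (induction k rule: less_induct)
  case (less k)
  show ?case
  proof (intro allI impI)
    fix x y assume H: "x \<in> paths G \<and> y \<in> paths G \<and> rng G x \<in> V \<and> rng G y = rng G x \<and>
     deg G x = (0, k) \<and> deg G y = (0, k)"
    obtain a b j where ab: "a \<in> paths G" "b \<in> paths G" "src G a = rng G b" "comp G a b = l"
     "deg G a = (0, j)" "j < pl" "src G a = rng G x" using vc1 H by blast
    have ra: "rng G a = rng G l" using comp_ok ab by metis
    show "src G x \<in> V \<and> x = y"
    proof (cases "j + k \<le> pl")
      case True
      have ax: "comp G a x \<in> paths G" "rng G (comp G a x) = rng G l" "deg G (comp G a x) = (0, j+k)"
        "src G (comp G a x) = src G x"
        using comp_ok[of a x] ab H ra by auto
      have ay: "comp G a y \<in> paths G" "rng G (comp G a y) = rng G l" "deg G (comp G a y) = (0, j+k)"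
        using comp_ok[of a y] ab H ra by auto
      have le: "(0, j+k) \<le> deg G l" using True dl by (simp add: less_eq_prod_def)
      have "comp G a x = comp G a y" using iso_r2 ax ay le by metis
      hence xy: "x = y" using cancel_l[of a x y] ab H by auto
      have "deg G l = (0, j+k) + (0, pl - (j+k))" using dl True by simp
      then obtain c d where cd: "c \<in> paths G" "d \<in> paths G" "src G c = rng G d" "deg G c = (0, j+k)"
        "comp G c d = l" using fact_ex lP by metis
      have "rng G c = rng G l" using comp_ok cd by metis
      hence "c = comp G a x" using iso_r2 ax cd le by metis
      hence "src G x \<in> V" using vc2[of c d] cd ax by auto
      thus ?thesis using xy by simp
    next
      case False
      have dx: "deg G x = (0, pl - j) + (0, k - (pl - j))" using H False by simp
      obtain x1 x2 where x12: "x1 \<in> paths G" "x2 \<in> paths G" "src G x1 = rng G x2" "deg G x1 = (0, pl - j)"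
        "deg G x2 = (0, k - (pl - j))" "comp G x1 x2 = x" using fact_ex[OF _ dx] H by metis
      have dy: "deg G y = (0, pl - j) + (0, k - (pl - j))" using H False by simp
      obtain y1 y2 where y12: "y1 \<in> paths G" "y2 \<in> paths G" "src G y1 = rng G y2" "deg G y1 = (0, pl - j)"
        "deg G y2 = (0, k - (pl - j))" "comp G y1 y2 = y" using fact_ex[OF _ dy] H by metis
      have rx1: "rng G x1 = rng G x" "rng G y1 = rng G y" using comp_ok x12 y12 by metis+
      have ax: "comp G a x1 \<in> paths G" "rng G (comp G a x1) = rng G l" "deg G (comp G a x1) = deg G l"
        "src G (comp G a x1) = src G x1"
        using comp_ok[of a x1] ab H ra x12 rx1 dl \<open>j < pl\<close> by auto
      have ay: "comp G a y1 \<in> paths G" "rng G (comp G a y1) = rng G l" "deg G (comp G a y1) = deg G l"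
        "src G (comp G a y1) = src G y1"
        using comp_ok[of a y1] ab H ra y12 rx1 dl \<open>j < pl\<close> by auto
      have "comp G a x1 = l" "comp G a y1 = l" using iso_r2[of _ l] ax ay lP by auto
      hence e1: "x1 = y1" using cancel_l[of a x1 y1] ab H x12 y12 rx1 by auto
      have sx1: "src G x1 = rng G l" using ax \<open>comp G a x1 = l\<close> rs_l by simp
      have "k - (pl - j) < k" using False \<open>j < pl\<close> by simp
      from less.IH[OF this, rule_format, of x2 y2] x12 y12 e1 sx1 rl_V
      have "src G x2 \<in> V \<and> x2 = y2" by auto
      moreover have "src G x = src G x2" using comp_ok x12 by metis
      ultimately show ?thesis using x12 y12 e1 by auto
    qed
  qed
qed

lemma bwd:
  "\<forall>x y. x \<in> paths G \<and> y \<in> paths G \<and> src G x \<in> V \<and> src G y = src G x \<and>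
     deg G x = (0, k) \<and> deg G y = (0, k) \<longrightarrow> rng G x \<in> V \<and> x = y"
proof (induction k rule: less_induct)
  case (less k)
  show ?case
  proof (intro allI impI)
    fix x y assume H: "x \<in> paths G \<and> y \<in> paths G \<and> src G x \<in> V \<and> src G y = src G x \<and>
     deg G x = (0, k) \<and> deg G y = (0, k)"
    obtain a b i where ab: "a \<in> paths G" "b \<in> paths G" "src G a = rng G b" "comp G a b = l"
     "deg G b = (0, i)" "i < pl" "src G a = src G x" using vc3 H by blast
    have sb: "src G b = src G l" using comp_ok ab by metis
    show "rng G x \<in> V \<and> x = y"
    proof (cases "k + i \<le> pl")
      case True
      have ax: "comp G x b \<in> paths G" "src G (comp G x b) = src G l" "deg G (comp G x b) = (0, k+i)"
        "rng G (comp G x b) = rng G x"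
        using comp_ok[of x b] ab H sb by auto
      have ay: "comp G y b \<in> paths G" "src G (comp G y b) = src G l" "deg G (comp G y b) = (0, k+i)"
        using comp_ok[of y b] ab H sb by auto
      have le: "(0, k+i) \<le> deg G l" using True dl by (simp add: less_eq_prod_def)
      have "comp G x b = comp G y b" using iso_s2 ax ay le by metis
      hence xy: "x = y" using cancel_r[of b x y] ab H by auto
      have "deg G l = (0, pl - (k+i)) + (0, k+i)" using dl True by simp
      then obtain c d where cd: "c \<in> paths G" "d \<in> paths G" "src G c = rng G d" "deg G d = (0, k+i)"
        "comp G c d = l" using fact_ex lP by metis
      have "src G d = src G l" using comp_ok cd by metis
      hence "d = comp G x b" using iso_s2 ax cd le by metis
      hence "rng G x \<in> V" using vc2[of c d] cd ax by auto
      thus ?thesis using xy by simp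
    next
      case False
      have dx: "deg G x = (0, k - (pl - i)) + (0, pl - i)" using H False by simp
      obtain x1 x2 where x12: "x1 \<in> paths G" "x2 \<in> paths G" "src G x1 = rng G x2" "deg G x1 = (0, k - (pl - i))"
        "deg G x2 = (0, pl - i)" "comp G x1 x2 = x" using fact_ex[OF _ dx] H by metis
      have dy: "deg G y = (0, k - (pl - i)) + (0, pl - i)" using H False by simp
      obtain y1 y2 where y12: "y1 \<in> paths G" "y2 \<in> paths G" "src G y1 = rng G y2" "deg G y1 = (0, k - (pl - i))"
        "deg G y2 = (0, pl - i)" "comp G y1 y2 = y" using fact_ex[OF _ dy] H by metis
      have rx1: "src G x2 = src G x" "src G y2 = src G y" using comp_ok x12 y12 by metis+
      have ax: "comp G x2 b \<in> paths G" "src G (comp G x2 b) = src G l" "deg G (comp G x2 b) = deg G l"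
        "rng G (comp G x2 b) = rng G x2"
        using comp_ok[of x2 b] ab H sb x12 rx1 dl \<open>i < pl\<close> by auto
      have ay: "comp G y2 b \<in> paths G" "src G (comp G y2 b) = src G l" "deg G (comp G y2 b) = deg G l"
        "rng G (comp G y2 b) = rng G y2"
        using comp_ok[of y2 b] ab H sb y12 rx1 dl \<open>i < pl\<close> by auto
      have "comp G x2 b = l" "comp G y2 b = l" using iso_s2[of _ l] ax ay lP by auto
      hence e1: "x2 = y2" using cancel_r[of b x2 y2] ab H x12 y12 rx1 by auto
      have sx1: "rng G x2 = src G l" using ax \<open>comp G x2 b = l\<close> rs_l by simp
      have "k - (pl - i) < k" using False \<open>i < pl\<close> by simp
      from less.IH[OF this, rule_format, of x1 y1] x12 y12 e1 sx1 rl_V rs_l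
      have "rng G x1 \<in> V \<and> x1 = y1" by auto
      moreover have "rng G x = rng G x1" using comp_ok x12 by metis
      ultimately show ?thesis using x12 y12 e1 by auto
    qed
  qed
qed

lemma ex_fwd: "\<forall>v \<in> V. \<exists>x. x \<in> paths G \<and> rng G x = v \<and> deg G x = (0, k)"
proof (induction k rule: less_induct)
  case (less k)
  show ?case
  proof
    fix v assume "v \<in> V"
    then obtain a b j where ab: "a \<in> paths G" "b \<in> paths G" "src G a = rng G b" "comp G a b = l"
     "deg G a = (0, j)" "j < pl" "src G a = v" using vc1 by blast
    have "deg G l = deg G a + deg G b" using comp_ok ab by metis
    hence db: "deg G b = (0, pl - j)" using ab dl by (simp add: prod_eq_iff)
    have sb: "src G b = src G l" using comp_ok ab by metis
    show "\<exists>x. x \<in> paths G \<and> rng G x = v \<and> deg G x = (0, k)"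
    proof (cases "k \<le> pl - j")
      case True
      hence "deg G b = (0, k) + (0, pl - j - k)" using db by simp
      then obtain c d where "c \<in> paths G" "d \<in> paths G" "src G c = rng G d" "deg G c = (0, k)"
        "comp G c d = b" using fact_ex ab by metis
      thus ?thesis using comp_ok ab by metis
    next
      case False
      hence "k - (pl - j) < k" using \<open>j < pl\<close> by simp
      from less.IH[OF this] rl_V obtain z where z: "z \<in> paths G" "rng G z = rng G l" "deg G z = (0, k - (pl - j))"
        by blast
      have "comp G b z \<in> paths G \<and> rng G (comp G b z) = v \<and> deg G (comp G b z) = (0, k)"
        using comp_ok[of b z] z ab sb rs_l db False by auto
      thus ?thesis by blast
    qed
  qed
qed

lemma ex_bwd: "\<forall>v \<in> V. \<exists>x. x \<in> paths G \<and> src G x = v \<and> deg G x = (0, k)"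
proof (induction k rule: less_induct)
  case (less k)
  show ?case
  proof
    fix v assume "v \<in> V"
    then obtain a b i where ab: "a \<in> paths G" "b \<in> paths G" "src G a = rng G b" "comp G a b = l"
     "deg G b = (0, i)" "i < pl" "src G a = v" using vc3 by blast
    have "deg G l = deg G a + deg G b" using comp_ok ab by metis
    hence db: "deg G a = (0, pl - i)" using ab dl by (simp add: prod_eq_iff)
    have sb: "rng G a = rng G l" using comp_ok ab by metis
    show "\<exists>x. x \<in> paths G \<and> src G x = v \<and> deg G x = (0, k)"
    proof (cases "k \<le> pl - i")
      case True
      hence "deg G a = (0, pl - i - k) + (0, k)" using db by simp
      then obtain c d where "c \<in> paths G" "d \<in> paths G" "src G c = rng G d" "deg G d = (0, k)"
        "comp G c d = a" using fact_ex ab by metis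
      thus ?thesis using comp_ok ab by metis
    next
      case False
      hence "k - (pl - i) < k" using \<open>i < pl\<close> by simp
      from less.IH[OF this] rl_V rs_l obtain z where z: "z \<in> paths G" "src G z = rng G l" "deg G z = (0, k - (pl - i))"
        by auto
      have "comp G z a \<in> paths G \<and> src G (comp G z a) = v \<and> deg G (comp G z a) = (0, k)"
        using comp_ok[of z a] z ab sb rs_l db False by auto
      thus ?thesis by blast
    qed
  qed
qed

end


context tg begin

lemma part1:
  assumes c1: "cyc G l1" and c2: "cyc G l2" and m: "red G m" "rng G m \<in> verts_on G l1"
  shows "bij_betw (\<lambda>s. F1 G m s)
              {s. blue G s \<and> rng G s = src G m \<and> src G s \<in> verts_on G l2}
              {s. blue G s \<and> rng G s = rng G m \<and> src G s \<in> verts_on G l2} \<and>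
            (\<forall>s. blue G s \<and> rng G s = src G m \<and> src G s \<in> verts_on G l2 \<longrightarrow>
                 deg G (F1 G m s) = deg G s)"
proof -
  interpret c1: cyc G l1 by (rule c1)
  interpret c2: cyc G l2 by (rule c2)
  define A where "A = {s. blue G s \<and> rng G s = src G m \<and> src G s \<in> verts_on G l2}"
  define B where "B = {s. blue G s \<and> rng G s = rng G m \<and> src G s \<in> verts_on G l2}"
  have mP: "m \<in> paths G" and dm: "deg G m = (0, snd (deg G m))" using m unfolding red_def
    by (auto simp: prod_eq_iff)
  have key: "\<exists>r. r \<in> paths G \<and> src G (F1 G m s) = rng G r \<and> deg G r = deg G m \<and>
     comp G (F1 G m s) r = comp G m s \<and> F1 G m s \<in> B \<and> deg G (F1 G m s) = deg G s \<and>
     rng G r \<in> verts_on G l2" if s: "s \<in> A" for s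
  proof -
    have sP: "s \<in> paths G" "snd (deg G s) = 0" "rng G s = src G m" "src G s \<in> verts_on G l2"
      using s unfolding A_def blue_def by auto
    have ms: "comp G m s \<in> paths G" "deg G (comp G m s) = deg G s + deg G m"
      "rng G (comp G m s) = rng G m" "src G (comp G m s) = src G s"
      using comp_ok[of m s] mP sP by (auto simp: add.commute)
    obtain t r where tr: "t \<in> paths G" "r \<in> paths G" "src G t = rng G r" "deg G t = deg G s"
      "deg G r = deg G m" "comp G t r = comp G m s" using fact_ex[OF ms(1,2)] by metis
    have F: "F1 G m s = t" unfolding F1_def using seg_prefix[of t r] tr by simp
    have rt: "rng G t = rng G m" "src G r = src G s" using comp_ok[of t r] tr ms by auto
    have "rng G r \<in> verts_on G l2" using c2.bwd[rule_format, of r r] tr rt sP dm by auto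
    hence "t \<in> B" unfolding B_def blue_def using tr rt sP by auto
    thus ?thesis using F tr \<open>rng G r \<in> verts_on G l2\<close> by auto
  qed
  have inj: "inj_on (\<lambda>s. F1 G m s) A"
  proof (rule inj_onI)
    fix s s' assume s: "s \<in> A" "s' \<in> A" and e: "F1 G m s = F1 G m s'"
    obtain r where r: "r \<in> paths G" "src G (F1 G m s) = rng G r" "deg G r = deg G m"
     "comp G (F1 G m s) r = comp G m s" "F1 G m s \<in> B" "deg G (F1 G m s) = deg G s"
     "rng G r \<in> verts_on G l2" using key[OF s(1)] by blast
    obtain r' where r': "r' \<in> paths G" "src G (F1 G m s') = rng G r'" "deg G r' = deg G m"
     "comp G (F1 G m s') r' = comp G m s'" "F1 G m s' \<in> B" "deg G (F1 G m s') = deg G s'"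
     "rng G r' \<in> verts_on G l2" using key[OF s(2)] by blast
    have "r = r'" using c2.fwd[rule_format, of r r'] r r' e dm by auto
    hence ce: "comp G m s = comp G m s'" using r r' e by simp
    have sA: "s \<in> paths G" "rng G s = src G m" "s' \<in> paths G" "rng G s' = src G m"
      using s unfolding A_def blue_def by auto
    have dd: "deg G s = deg G s'" using r(6) r'(6) e by simp
    show "s = s'" using cancel_l[OF mP sA(1) sA(3) sA(2)[symmetric] sA(4)[symmetric] dd ce] .
  qed
  have img: "(\<lambda>s. F1 G m s) ` A = B"
  proof
    show "(\<lambda>s. F1 G m s) ` A \<subseteq> B" using key by blast
  next
    show "B \<subseteq> (\<lambda>s. F1 G m s) ` A"
    proof
      fix t assume t: "t \<in> B"
      have tP: "t \<in> paths G" "snd (deg G t) = 0" "rng G t = rng G m" "src G t \<in> verts_on G l2"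
        using t unfolding B_def blue_def by auto
      obtain r where r: "r \<in> paths G" "rng G r = src G t" "deg G r = (0, snd (deg G m))"
        using c2.ex_fwd tP by blast
      have tr: "comp G t r \<in> paths G" "deg G (comp G t r) = deg G m + deg G t"
        "rng G (comp G t r) = rng G m" "src G (comp G t r) = src G r"
        using comp_ok[of t r] tP r dm by (auto simp: add.commute)
      obtain m' s where ms: "m' \<in> paths G" "s \<in> paths G" "src G m' = rng G s" "deg G m' = deg G m"
        "deg G s = deg G t" "comp G m' s = comp G t r" using fact_ex[OF tr(1,2)] by metis
      have "rng G m' = rng G m" using comp_ok[of m' s] ms tr by auto
      hence "m' = m" using c1.fwd[rule_format, of m m'] mP ms m dm by auto
      have "src G r \<in> verts_on G l2" using c2.fwd[rule_format, of r r] r tP by auto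
      hence "src G s \<in> verts_on G l2" using comp_ok[of m' s] ms tr by auto
      hence sA: "s \<in> A" unfolding A_def blue_def using ms tP \<open>m' = m\<close> by auto
      have "F1 G m s = t" unfolding F1_def using seg_prefix[of t r] ms tP r \<open>m' = m\<close> by auto
      thus "t \<in> (\<lambda>s. F1 G m s) ` A" using sA by blast
    qed
  qed
  have "\<forall>s. s \<in> A \<longrightarrow> deg G (F1 G m s) = deg G s" using key by blast
  thus ?thesis using inj img unfolding bij_betw_def A_def B_def by blast
qed

lemma part2:
  assumes c1: "cyc G l1" and c2: "cyc G l2" and n: "red G n" "rng G n \<in> verts_on G l2"
  shows "bij_betw (\<lambda>s. F2 G s n)
              {s. blue G s \<and> rng G s \<in> verts_on G l1 \<and> src G s = rng G n}
              {s. blue G s \<and> rng G s \<in> verts_on G l1 \<and> src G s = src G n} \<and>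
            (\<forall>s. blue G s \<and> rng G s \<in> verts_on G l1 \<and> src G s = rng G n \<longrightarrow>
                 deg G (F2 G s n) = deg G s)"
proof -
  interpret c1: cyc G l1 by (rule c1)
  interpret c2: cyc G l2 by (rule c2)
  define A where "A = {s. blue G s \<and> rng G s \<in> verts_on G l1 \<and> src G s = rng G n}"
  define B where "B = {s. blue G s \<and> rng G s \<in> verts_on G l1 \<and> src G s = src G n}"
  have nP: "n \<in> paths G" and dn: "deg G n = (0, snd (deg G n))" using n unfolding red_def
    by (auto simp: prod_eq_iff)
  have key: "\<exists>a. a \<in> paths G \<and> src G a = rng G (F2 G s n) \<and> deg G a = deg G n \<and>
     comp G a (F2 G s n) = comp G s n \<and> F2 G s n \<in> B \<and> deg G (F2 G s n) = deg G s \<and>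
     src G a \<in> verts_on G l1" if s: "s \<in> A" for s
  proof -
    have sP: "s \<in> paths G" "snd (deg G s) = 0" "rng G s \<in> verts_on G l1" "src G s = rng G n"
      using s unfolding A_def blue_def by auto
    have sn: "comp G s n \<in> paths G" "deg G (comp G s n) = deg G n + deg G s"
      "rng G (comp G s n) = rng G s" "src G (comp G s n) = src G n"
      using comp_ok[of s n] nP sP by (auto simp: add.commute)
    obtain a t where at: "a \<in> paths G" "t \<in> paths G" "src G a = rng G t" "deg G a = deg G n"
      "deg G t = deg G s" "comp G a t = comp G s n" using fact_ex[OF sn(1,2)] by metis
    have F: "F2 G s n = t" unfolding F2_def using seg_suffix[of a t] at by simp
    have rt: "rng G a = rng G s" "src G t = src G n" using comp_ok[of a t] at sn by auto
    have "src G a \<in> verts_on G l1" using c1.fwd[rule_format, of a a] at rt sP dn by auto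
    hence "t \<in> B" unfolding B_def blue_def using at rt sP by auto
    thus ?thesis using F at \<open>src G a \<in> verts_on G l1\<close> by auto
  qed
  have inj: "inj_on (\<lambda>s. F2 G s n) A"
  proof (rule inj_onI)
    fix s s' assume s: "s \<in> A" "s' \<in> A" and e: "F2 G s n = F2 G s' n"
    obtain a where a: "a \<in> paths G" "src G a = rng G (F2 G s n)" "deg G a = deg G n"
     "comp G a (F2 G s n) = comp G s n" "F2 G s n \<in> B" "deg G (F2 G s n) = deg G s"
     "src G a \<in> verts_on G l1" using key[OF s(1)] by blast
    obtain a' where a': "a' \<in> paths G" "src G a' = rng G (F2 G s' n)" "deg G a' = deg G n"
     "comp G a' (F2 G s' n) = comp G s' n" "F2 G s' n \<in> B" "deg G (F2 G s' n) = deg G s'"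
     "src G a' \<in> verts_on G l1" using key[OF s(2)] by blast
    have "a = a'" using c1.bwd[rule_format, of a a'] a a' e dn by auto
    hence ce: "comp G s n = comp G s' n" using a a' e by simp
    have sA: "s \<in> paths G" "src G s = rng G n" "s' \<in> paths G" "src G s' = rng G n"
      using s unfolding A_def blue_def by auto
    have dd: "deg G s = deg G s'" using a(6) a'(6) e by simp
    show "s = s'" using cancel_r[OF nP sA(1) sA(3) sA(2) sA(4) dd ce] .
  qed
  have img: "(\<lambda>s. F2 G s n) ` A = B"
  proof
    show "(\<lambda>s. F2 G s n) ` A \<subseteq> B" using key by blast
  next
    show "B \<subseteq> (\<lambda>s. F2 G s n) ` A"
    proof
      fix t assume t: "t \<in> B"
      have tP: "t \<in> paths G" "snd (deg G t) = 0" "rng G t \<in> verts_on G l1" "src G t = src G n"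
        using t unfolding B_def blue_def by auto
      obtain a where a: "a \<in> paths G" "src G a = rng G t" "deg G a = (0, snd (deg G n))"
        using c1.ex_bwd tP by blast
      have at: "comp G a t \<in> paths G" "deg G (comp G a t) = deg G t + deg G n"
        "rng G (comp G a t) = rng G a" "src G (comp G a t) = src G n"
        using comp_ok[of a t] tP a dn by (auto simp: add.commute)
      obtain s n' where sn: "s \<in> paths G" "n' \<in> paths G" "src G s = rng G n'" "deg G s = deg G t"
        "deg G n' = deg G n" "comp G s n' = comp G a t" using fact_ex[OF at(1,2)] by metis
      have "src G n' = src G n" using comp_ok[of s n'] sn at by auto
      moreover have "src G n \<in> verts_on G l2" using c2.fwd[rule_format, of n n] nP n dn by auto
      ultimately have "n' = n" using c2.bwd[rule_format, of n n'] nP sn dn by auto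
      have "rng G a \<in> verts_on G l1" using c1.bwd[rule_format, of a a] a tP by auto
      hence "rng G s \<in> verts_on G l1" using comp_ok[of s n'] sn at by auto
      hence sA: "s \<in> A" unfolding A_def blue_def using sn tP \<open>n' = n\<close> by auto
      have "F2 G s n = t" unfolding F2_def using seg_suffix[of a t] sn tP a dn \<open>n' = n\<close> by auto
      thus "t \<in> (\<lambda>s. F2 G s n) ` A" using sA by blast
    qed
  qed
  have "\<forall>s. s \<in> A \<longrightarrow> deg G (F2 G s n) = deg G s" using key by blast
  thus ?thesis using inj img unfolding bij_betw_def A_def B_def by blast
qed

end


theorem lemma3p3:
  fixes G :: "('a, 'b) twograph_scheme" and l1 l2 :: 'a
  assumes "is_2graph G"
    and "row_finite G"
    and "\<forall>l. is_cycle G l \<longrightarrow> \<not> blue G l"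
    and "\<forall>v\<in>vertices G. \<exists>l. isolated_cycle G l \<and> red G l \<and> rng G l = v"
    and "isolated_cycle G l1" and "red G l1"
    and "isolated_cycle G l2" and "red G l2"
  shows "(\<forall>m. red G m \<and> rng G m \<in> verts_on G l1 \<longrightarrow>
            bij_betw (\<lambda>s. F1 G m s)
              {s. blue G s \<and> rng G s = src G m \<and> src G s \<in> verts_on G l2}
              {s. blue G s \<and> rng G s = rng G m \<and> src G s \<in> verts_on G l2} \<and>
            (\<forall>s. blue G s \<and> rng G s = src G m \<and> src G s \<in> verts_on G l2 \<longrightarrow>
                 deg G (F1 G m s) = deg G s))
       \<and> (\<forall>n. red G n \<and> rng G n \<in> verts_on G l2 \<longrightarrow>
            bij_betw (\<lambda>s. F2 G s n)
              {s. blue G s \<and> rng G s \<in> verts_on G l1 \<and> src G s = rng G n}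
              {s. blue G s \<and> rng G s \<in> verts_on G l1 \<and> src G s = src G n} \<and>
            (\<forall>s. blue G s \<and> rng G s \<in> verts_on G l1 \<and> src G s = rng G n \<longrightarrow>
                 deg G (F2 G s n) = deg G s))"
  proof -
  have t: "tg G" unfolding tg_def using assms(1) .
  have c1: "cyc G l1" unfolding cyc_def cyc_axioms_def tg_def using assms by auto
  have c2: "cyc G l2" unfolding cyc_def cyc_axioms_def tg_def using assms by auto
  show ?thesis using tg.part1[OF t c1 c2] tg.part2[OF t c1 c2] by blast
qed

end
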